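(* Let $\theta>0$, $N\ge1$, $g(u)=(u-\theta)_+$, and let $\delta>\theta$. Set $T_\varepsilon=\ln\frac{\delta-\theta}{\varepsilon}$. Then for every $\gamma\in(0,1)$ there exists $\varepsilon_0>0$ such that for every $\varepsilon\in(0,\varepsilon_0)$ and every $L\in(0,\gamma\ln\frac1\varepsilon)$, the solution $w$ of $w_t=\Delta w+g(w)$ on $(0,\infty)\times\mathbb R^N$ with $w(0,x)=(\theta+\varepsilon)\mathbf 1_{B_L}(x)$ satisfies $\sup_{x\in\mathbb R^N}w(T_\varepsilon,x)\le\theta$; consequently $w(t,\cdot)\to0$ uniformly as $t\to\infty$.
   Context: $(s)_+$ denotes the positive part of $s$; $B_L$ is the open ball of radius $L$ centred at $0$ in $\mathbb R^N$. *)

theory Defs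
  imports "HOL-Analysis.Analysis"
begin

definition heat_kernel :: "real \<Rightarrow> real^'n \<Rightarrow> real" where
  "heat_kernel t z = (4 * pi * t) powr (- real CARD('n) / 2) * exp (- (norm z)\<^sup>2 / (4 * t))"

definition pos_part :: "real \<Rightarrow> real" where
  "pos_part s = max s 0"

text \<open>Mild (Duhamel) solution of w_t = Laplacian w + g(w) on (0,\<infinity>) x R^N with initial datum w0,
  in the standard uniqueness class of functions bounded on every strip (0,T] x R^N.\<close>
definition mild_solution ::
  "(real \<Rightarrow> real) \<Rightarrow> (real^'n \<Rightarrow> real) \<Rightarrow> (real \<Rightarrow> real^'n \<Rightarrow> real) \<Rightarrow> bool" where
  "mild_solution g w0 w \<longleftrightarrow>
     (\<forall>T>0. \<exists>M. \<forall>t\<in>{0<..T}. \<forall>x. \<bar>w t x\<bar> \<le> M) \<and>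
     (\<forall>t>0. \<forall>x.
        integrable lborel (\<lambda>y. heat_kernel t (x - y) * w0 y) \<and>
        (\<forall>s\<in>{0<..<t}. integrable lborel (\<lambda>y. heat_kernel (t - s) (x - y) * g (w s y))) \<and>
        set_integrable lborel {0<..<t}
          (\<lambda>s. \<integral>y. heat_kernel (t - s) (x - y) * g (w s y) \<partial>lborel) \<and>
        w t x = (\<integral>y. heat_kernel t (x - y) * w0 y \<partial>lborel)
              + (\<integral>s\<in>{0<..<t}. (\<integral>y. heat_kernel (t - s) (x - y) * g (w s y) \<partial>lborel) \<partial>lborel))"

end

theory Submission
  imports Defs "HOL-Probability.Probability" "HOL-Real_Asymp.Real_Asymp"
begin


lemma hk_prod:
  fixes x y :: "real^'n"
  assumes t: "t > 0"
  shows "heat_kernel t (x - y) = (\<Prod>b\<in>Basis. normal_density (x \<bullet> b) (sqrt (2*t)) (y \<bullet> b))"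
proof -
  have cB: "card (Basis :: (real^'n) set) = CARD('n)" by simp
  have nd: "normal_density (x \<bullet> b) (sqrt (2*t)) (y \<bullet> b) = 
      (1 / sqrt (4*pi*t)) * exp (- (((x - y) \<bullet> b)\<^sup>2) / (4*t))" for b
    using t by (simp add: normal_density_def inner_diff_left power2_commute)
  have "(\<Prod>b\<in>Basis. normal_density (x \<bullet> b) (sqrt (2*t)) (y \<bullet> b))
      = (\<Prod>b\<in>(Basis::(real^'n) set). (1 / sqrt (4*pi*t))) * (\<Prod>b\<in>(Basis::(real^'n) set). exp (- (((x - y) \<bullet> b)\<^sup>2) / (4*t)))"
    unfolding nd prod.distrib by simp
  also have "(\<Prod>b\<in>(Basis::(real^'n) set). exp (- (((x - y) \<bullet> b)\<^sup>2) / (4*t))) = exp (\<Sum>b\<in>(Basis::(real^'n) set). - (((x - y) \<bullet> b)\<^sup>2) / (4*t))"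
    by (simp add: exp_sum)
  also have "(\<Sum>b\<in>(Basis::(real^'n) set). - (((x - y) \<bullet> b)\<^sup>2) / (4*t)) = - (norm (x - y))\<^sup>2 / (4*t)"
  proof -
    have "(norm (x - y))\<^sup>2 = (x - y) \<bullet> (x - y)" by (simp add: power2_norm_eq_inner)
    also have "\<dots> = (\<Sum>b\<in>(Basis::(real^'n) set). ((x - y) \<bullet> b) * ((x - y) \<bullet> b))" by (rule euclidean_inner)
    finally have "(norm (x - y))\<^sup>2 = (\<Sum>b\<in>(Basis::(real^'n) set). ((x - y) \<bullet> b)\<^sup>2)"
      by (simp add: power2_eq_square)
    then show ?thesis by (simp add: sum_divide_distrib[symmetric] sum_negf)
  qed
  also have "(\<Prod>b\<in>(Basis::(real^'n) set). (1 / sqrt (4*pi*t))) = (4*pi*t) powr (- real CARD('n) / 2)"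
  proof -
    have e1: "1 / sqrt (4*pi*t) = (4*pi*t) powr (-1/2)"
      using t by (simp add: powr_minus_divide powr_half_sqrt)
    have "(\<Prod>b\<in>(Basis::(real^'n) set). (1 / sqrt (4*pi*t))) = ((4*pi*t) powr (-1/2)) ^ CARD('n)" 
      unfolding e1 by simp
    also have "((4*pi*t) powr (-1/2)) ^ CARD('n) = (4*pi*t) powr (- real CARD('n) / 2)"
      using t by (simp add: powr_realpow[symmetric] powr_powr)
    finally show ?thesis .
  qed
  finally show ?thesis unfolding heat_kernel_def by simp
qed

lemma nn_integral_nd: assumes that: "\<sigma> > 0" shows "(\<integral>\<^sup>+v. ennreal (normal_density \<mu> \<sigma> v) \<partial>lborel) = 1"
proof -
  have "(\<integral>\<^sup>+v. ennreal (normal_density \<mu> \<sigma> v) \<partial>lborel) = ennreal (\<integral>v. normal_density \<mu> \<sigma> v \<partial>lborel)"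
    using that by (intro nn_integral_eq_integral) auto
  then show ?thesis using that by simp
qed

lemma marg_nn:
  fixes x :: "real^'n" and f :: "real \<Rightarrow> real"
  assumes t: "t > 0" and b0: "b0 \<in> Basis" and [measurable]: "f \<in> borel_measurable borel"
    and fnn: "\<And>u. f u \<ge> 0"
  shows "(\<integral>\<^sup>+y. ennreal (heat_kernel t (x - y) * f (y \<bullet> b0)) \<partial>lborel)
       = (\<integral>\<^sup>+u. ennreal (normal_density (x \<bullet> b0) (sqrt (2*t)) u * f u) \<partial>lborel)"
proof -
  define F where "F b v = ennreal (normal_density (x \<bullet> b) (sqrt (2*t)) v * (if b = b0 then f v else 1))" for b v
  have eq: "ennreal (heat_kernel t (x - y) * f (y \<bullet> b0)) = (\<Prod>b\<in>Basis. F b (y \<bullet> b))" for y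
  proof -
    have "(\<Prod>b\<in>(Basis::(real^'n) set). normal_density (x \<bullet> b) (sqrt (2*t)) (y \<bullet> b) * (if b = b0 then f (y \<bullet> b) else 1))
        = (\<Prod>b\<in>(Basis::(real^'n) set). normal_density (x \<bullet> b) (sqrt (2*t)) (y \<bullet> b)) * 
          (\<Prod>b\<in>(Basis::(real^'n) set). (if b = b0 then f (y \<bullet> b) else 1))"
      by (rule prod.distrib)
    also have "(\<Prod>b\<in>(Basis::(real^'n) set). (if b = b0 then f (y \<bullet> b) else 1)) = f (y \<bullet> b0)"
      using b0 by (simp add: prod.delta')
    finally have calc: "(\<Prod>b\<in>(Basis::(real^'n) set). normal_density (x \<bullet> b) (sqrt (2*t)) (y \<bullet> b) * (if b = b0 then f (y \<bullet> b) else 1))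
        = (\<Prod>b\<in>(Basis::(real^'n) set). normal_density (x \<bullet> b) (sqrt (2*t)) (y \<bullet> b)) * f (y \<bullet> b0)" .
    show ?thesis unfolding F_def hk_prod[OF t] using fnn
      by (subst prod_ennreal) (auto simp: calc)
  qed
  have "(\<integral>\<^sup>+y. ennreal (heat_kernel t (x - y) * f (y \<bullet> b0)) \<partial>lborel) = (\<integral>\<^sup>+y. (\<Prod>b\<in>Basis. F b (y \<bullet> b)) \<partial>lborel)"
    unfolding eq ..
  also have "\<dots> = (\<Prod>b\<in>Basis. (\<integral>\<^sup>+v. F b v \<partial>lborel))"
    by (rule nn_integral_lborel_prod) (auto simp: F_def)
  also have "\<dots> = (\<integral>\<^sup>+v. F b0 v \<partial>lborel) * (\<Prod>b\<in>Basis - {b0}. (\<integral>\<^sup>+v. F b v \<partial>lborel))"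
    using b0 by (simp add: prod.remove)
  also have "(\<Prod>b\<in>Basis - {b0}. (\<integral>\<^sup>+v. F b v \<partial>lborel)) = 1"
    by (rule prod.neutral) (use t in \<open>auto simp: F_def nn_integral_nd\<close>)
  finally show ?thesis by (simp add: F_def)
qed

lemma heat_kernel_measurable[measurable]: "heat_kernel t \<in> borel_measurable borel"
  unfolding heat_kernel_def[abs_def] by measurable

lemma heat_kernel_nonneg: "heat_kernel t z \<ge> 0"
  unfolding heat_kernel_def by simp

lemma heat_kernel_le: "t > 0 \<Longrightarrow> heat_kernel t z \<le> (4*pi*t) powr (- real CARD('n) / 2)"
  for z :: "real^'n"
  unfolding heat_kernel_def by (simp add: mult_left_le)

lemma nd_integrable_f:
  fixes f :: "real \<Rightarrow> real"
  assumes s: "\<sigma> > 0" and [measurable]: "f \<in> borel_measurable borel"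
    and f: "\<And>u. 0 \<le> f u" "\<And>u. f u \<le> C"
  shows "integrable lborel (\<lambda>u. normal_density \<mu> \<sigma> u * f u)"
proof (rule Bochner_Integration.integrable_bound[where f="\<lambda>u. C * normal_density \<mu> \<sigma> u"])
  show "integrable lborel (\<lambda>u. C * normal_density \<mu> \<sigma> u)" using s by auto
  show "AE x in lborel. norm (normal_density \<mu> \<sigma> x * f x) \<le> norm (C * normal_density \<mu> \<sigma> x)"
  proof (intro AE_I2)
    fix u
    have "normal_density \<mu> \<sigma> u * f u \<le> normal_density \<mu> \<sigma> u * \<bar>C\<bar>"
      using f(2)[of u] by (intro mult_left_mono) auto
    then show "norm (normal_density \<mu> \<sigma> u * f u) \<le> norm (C * normal_density \<mu> \<sigma> u)"
      using f(1)[of u] by (simp add: abs_mult mult.commute)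
  qed
qed measurable

lemma marg_int:
  fixes x :: "real^'n" and f :: "real \<Rightarrow> real"
  assumes t: "t > 0" and b0: "b0 \<in> Basis" and fm[measurable]: "f \<in> borel_measurable borel"
    and f: "\<And>u. 0 \<le> f u" "\<And>u. f u \<le> C"
  shows "integrable lborel (\<lambda>y. heat_kernel t (x - y) * f (y \<bullet> b0))"
    and "(\<integral>y. heat_kernel t (x - y) * f (y \<bullet> b0) \<partial>lborel)
       = (\<integral>u. normal_density (x \<bullet> b0) (sqrt (2*t)) u * f u \<partial>lborel)"
proof -
  have s: "sqrt (2*t) > 0" using t by simp
  have i1: "integrable lborel (\<lambda>u. normal_density (x \<bullet> b0) (sqrt (2*t)) u * f u)"
    by (rule nd_integrable_f[OF s _ f]) simp
  have fin: "(\<integral>\<^sup>+u. ennreal (normal_density (x \<bullet> b0) (sqrt (2*t)) u * f u) \<partial>lborel) < \<infinity>"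
    using i1 by (simp add: integrable_iff_bounded f)
  have m: "(\<lambda>y. heat_kernel t (x - y) * f (y \<bullet> b0)) \<in> borel_measurable lborel" by measurable
  have nn: "AE y in lborel. 0 \<le> heat_kernel t (x - y) * f (y \<bullet> b0)"
    using f by (simp add: heat_kernel_nonneg)
  show "integrable lborel (\<lambda>y. heat_kernel t (x - y) * f (y \<bullet> b0))"
    by (rule integrableI_nonneg[OF m nn]) (use fin in \<open>simp add: marg_nn[OF t b0 fm f(1)] infinity_ennreal_def\<close>)
  show "(\<integral>y. heat_kernel t (x - y) * f (y \<bullet> b0) \<partial>lborel)
       = (\<integral>u. normal_density (x \<bullet> b0) (sqrt (2*t)) u * f u \<partial>lborel)"
    by (subst integral_eq_nn_integral[OF m nn], subst integral_eq_nn_integral)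
       (auto simp: marg_nn[OF t b0 fm f(1)] f)
qed

lemma heat_mass:
  fixes x :: "real^'n"
  assumes t: "t > 0"
  shows "integrable lborel (\<lambda>y. heat_kernel t (x - y))" "(\<integral>y. heat_kernel t (x - y) \<partial>lborel) = 1"
proof -
  have b0: "(SOME b. b \<in> Basis) \<in> (Basis :: (real^'n) set)" by (rule SOME_Basis)
  note m = marg_int[OF t b0, of "\<lambda>_. 1" 1 x]
  show "integrable lborel (\<lambda>y. heat_kernel t (x - y))" using m(1) by simp
  show "(\<integral>y. heat_kernel t (x - y) \<partial>lborel) = 1" using m(2) t by simp
qed



lemma heat_bound:
  fixes x :: "real^'n" and h :: "real^'n \<Rightarrow> real" and f :: "real \<Rightarrow> real"
  assumes t: "t > 0" and b0: "b0 \<in> Basis" and fm[measurable]: "f \<in> borel_measurable borel"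
    and f: "\<And>u. 0 \<le> f u" "\<And>u. f u \<le> C" and c: "c \<ge> 0"
    and hi: "integrable lborel (\<lambda>y. heat_kernel t (x - y) * h y)"
    and hb: "\<And>y. h y \<le> c * f (y \<bullet> b0)"
  shows "(\<integral>y. heat_kernel t (x - y) * h y \<partial>lborel) \<le> c * (\<integral>u. normal_density (x \<bullet> b0) (sqrt (2*t)) u * f u \<partial>lborel)"
proof -
  have f': "0 \<le> c * f u" "c * f u \<le> c * C" for u using f c by (auto intro: mult_left_mono)
  note m = marg_int[OF t b0 _ f', where x=x]
  have "(\<integral>y. heat_kernel t (x - y) * h y \<partial>lborel) \<le> (\<integral>y. heat_kernel t (x - y) * (c * f (y \<bullet> b0)) \<partial>lborel)"
    by (rule integral_mono[OF hi m(1)]) (auto intro!: mult_left_mono hb heat_kernel_nonneg)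
  also have "\<dots> = (\<integral>u. normal_density (x \<bullet> b0) (sqrt (2*t)) u * (c * f u) \<partial>lborel)"
    by (rule m(2)) simp
  also have "\<dots> = c * (\<integral>u. normal_density (x \<bullet> b0) (sqrt (2*t)) u * f u \<partial>lborel)"
    by (simp add: mult.left_commute)
  finally show ?thesis .
qed

lemma heat_bound_const:
  fixes x :: "real^'n" and h :: "real^'n \<Rightarrow> real"
  assumes t: "t > 0" and c: "c \<ge> 0"
    and hi: "integrable lborel (\<lambda>y. heat_kernel t (x - y) * h y)"
    and hb: "\<And>y. h y \<le> c"
  shows "(\<integral>y. heat_kernel t (x - y) * h y \<partial>lborel) \<le> c"
proof -
  have "(\<integral>y. heat_kernel t (x - y) * h y \<partial>lborel) \<le> (\<integral>y. heat_kernel t (x - y) * c \<partial>lborel)"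
    using heat_mass(1)[OF t, of x] 
    by (intro integral_mono[OF hi]) (auto intro!: mult_left_mono hb heat_kernel_nonneg)
  also have "\<dots> = c" using heat_mass(2)[OF t, of x] by simp
  finally show ?thesis .
qed

lemma nd_le: "\<sigma> > 0 \<Longrightarrow> normal_density \<mu> \<sigma> u \<le> 1 / sqrt (2 * pi * \<sigma>\<^sup>2)"
  unfolding normal_density_def by (simp add: divide_le_eq)

lemma nd_ind_le_len:
  assumes s: "\<sigma> > 0" and ab: "a \<le> b"
  shows "(\<integral>u. normal_density \<mu> \<sigma> u * indicator {a<..<b} u \<partial>lborel) \<le> (b - a) / sqrt (2 * pi * \<sigma>\<^sup>2)"
proof -
  have "(\<integral>u. normal_density \<mu> \<sigma> u * indicator {a<..<b} u \<partial>lborel) \<le> (\<integral>u. 1 / sqrt (2 * pi * \<sigma>\<^sup>2) * indicator {a<..<b} u \<partial>lborel)"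
  proof (rule integral_mono)
    show "integrable lborel (\<lambda>u. normal_density \<mu> \<sigma> u * indicator {a<..<b} u)"
      by (rule nd_integrable_f[OF s, where C=1]) (auto split: split_indicator)
    show "integrable lborel (\<lambda>u. 1 / sqrt (2 * pi * \<sigma>\<^sup>2) * indicator {a<..<b} u)"
      using ab by (intro integrable_mult_right integrable_real_indicator) auto
    show "normal_density \<mu> \<sigma> u * indicator {a<..<b} u \<le> 1 / sqrt (2 * pi * \<sigma>\<^sup>2) * indicator {a<..<b} u" for u
      using nd_le[OF s] by (auto split: split_indicator)
  qed
  also have "\<dots> = (b - a) / sqrt (2 * pi * \<sigma>\<^sup>2)"
    using ab by simp
  finally show ?thesis .
qed

lemma nd_ind_escape:
  assumes s: "\<sigma> > 0" and L: "L \<ge> 0"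
  shows "(\<integral>u. normal_density \<mu> \<sigma> u * indicator {-L<..<L} u \<partial>lborel) \<le> 1 - normal_density 0 \<sigma> (L+1)"
proof -
  define J where "J = (if \<mu> \<ge> 0 then {\<mu>+L..\<mu>+L+1} else {\<mu>-L-1..\<mu>-L})"
  have Jm: "measure lborel J = 1" by (simp add: J_def)
  have Jdis: "u \<in> J \<Longrightarrow> u \<notin> {-L<..<L}" for u using L by (auto simp: J_def split: if_splits)
  have Jnd: "u \<in> J \<Longrightarrow> normal_density 0 \<sigma> (L+1) \<le> normal_density \<mu> \<sigma> u" for u
  proof -
    assume u: "u \<in> J"
    have "\<bar>u - \<mu>\<bar> \<le> L + 1" using u L by (auto simp: J_def split: if_splits)
    then have "\<bar>u - \<mu>\<bar>^2 \<le> (L+1)^2" by (rule power_mono) auto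
    then have "(u - \<mu>)\<^sup>2 \<le> (L+1)\<^sup>2" by simp
    then show ?thesis using s unfolding normal_density_def
      by (auto intro!: mult_left_mono divide_right_mono)
  qed
  have i1: "integrable lborel (\<lambda>u. normal_density \<mu> \<sigma> u * indicator {-L<..<L} u)"
    by (rule nd_integrable_f[OF s, where C=1]) (auto split: split_indicator)
  have i2: "integrable lborel (\<lambda>u. normal_density 0 \<sigma> (L+1) * indicator J u)"
    by (intro integrable_mult_right integrable_real_indicator) (auto simp: J_def)
  have "(\<integral>u. normal_density \<mu> \<sigma> u * indicator {-L<..<L} u \<partial>lborel) + normal_density 0 \<sigma> (L+1)
      = (\<integral>u. normal_density \<mu> \<sigma> u * indicator {-L<..<L} u + normal_density 0 \<sigma> (L+1) * indicator J u \<partial>lborel)"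
    using i1 i2 Jm by (simp add: Bochner_Integration.integral_add)
  also have "\<dots> \<le> (\<integral>u. normal_density \<mu> \<sigma> u \<partial>lborel)"
  proof (rule integral_mono)
    show "integrable lborel (\<lambda>u. normal_density \<mu> \<sigma> u * indicator {-L<..<L} u + normal_density 0 \<sigma> (L+1) * indicator J u)"
      using i1 i2 by simp
    show "integrable lborel (normal_density \<mu> \<sigma>)" using s by simp
    show "normal_density \<mu> \<sigma> u * indicator {- L<..<L} u + normal_density 0 \<sigma> (L + 1) * indicator J u \<le> normal_density \<mu> \<sigma> u" for u
      using Jdis[of u] Jnd[of u] by (auto split: split_indicator)
  qed
  also have "\<dots> = 1" using s by simp
  finally show ?thesis by simp
qed

lemma nd_ind_far:
  assumes s: "\<sigma> > 0" and R: "R > 0" and far: "\<bar>\<mu>\<bar> \<ge> L + R"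
  shows "(\<integral>u. normal_density \<mu> \<sigma> u * indicator {-L<..<L} u \<partial>lborel) \<le> \<sigma>\<^sup>2 / R\<^sup>2"
proof -
  have "(\<integral>u. normal_density \<mu> \<sigma> u * indicator {-L<..<L} u \<partial>lborel) \<le> (\<integral>u. normal_density \<mu> \<sigma> u * (u - \<mu>)^(2*1) / R\<^sup>2 \<partial>lborel)"
  proof (rule integral_mono)
    show "integrable lborel (\<lambda>u. normal_density \<mu> \<sigma> u * indicator {-L<..<L} u)"
      by (rule nd_integrable_f[OF s, where C=1]) (auto split: split_indicator)
    show "integrable lborel (\<lambda>u. normal_density \<mu> \<sigma> u * (u - \<mu>)^(2*1) / R\<^sup>2)"
      using integrable_normal_moment[where k="2*1" and \<mu>=\<mu> and \<sigma>=\<sigma>] s by simp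
    show "normal_density \<mu> \<sigma> u * indicator {-L<..<L} u \<le> normal_density \<mu> \<sigma> u * (u - \<mu>)^(2*1) / R\<^sup>2" for u
    proof (cases "u \<in> {-L<..<L}")
      case True
      then have "R \<le> \<bar>u - \<mu>\<bar>" using far by auto
      then have "R\<^sup>2 \<le> (u - \<mu>)\<^sup>2" using R by (simp add: abs_le_square_iff[symmetric])
      then have "1 \<le> (u - \<mu>)\<^sup>2 / R\<^sup>2" using R by simp
      then have "normal_density \<mu> \<sigma> u * 1 \<le> normal_density \<mu> \<sigma> u * ((u - \<mu>)\<^sup>2 / R\<^sup>2)"
        by (intro mult_left_mono) auto
      then show ?thesis using True by simp
    qed (simp add: divide_nonneg_nonneg)
  qed
  also have "\<dots> = (\<integral>u. normal_density \<mu> \<sigma> u * (u - \<mu>)^(2*1) \<partial>lborel) / R\<^sup>2"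
    by simp
  also have "\<dots> = \<sigma>\<^sup>2 / R\<^sup>2"
    using integral_normal_moment_even[where k=1 and \<mu>=\<mu> and \<sigma>=\<sigma>] s by simp
  finally show ?thesis .
qed



lemma ftc_set:
  fixes f P :: "real \<Rightarrow> real"
  assumes ab: "a \<le> b" and S1: "{a<..<b} \<subseteq> S" and S2: "S \<subseteq> {a..b}" and Sm: "S \<in> sets borel"
    and cf: "continuous_on {a..b} f"
    and d: "\<And>x. a \<le> x \<Longrightarrow> x \<le> b \<Longrightarrow> (P has_real_derivative f x) (at x)"
  shows "set_integrable lborel S f" "(LINT x:S|lborel. f x) = P b - P a"
proof -
  show "set_integrable lborel S f"
    by (rule set_integrable_subset[OF borel_integrable_atLeastAtMost'[OF cf]]) (use S2 Sm in auto)
  have "(LINT x:S|lborel. f x) = (LINT x:{a..b}|lborel. f x)"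
  proof (rule set_integral_discrete_difference[where X="{a, b}"])
    show "S - {a..b} \<union> ({a..b} - S) \<subseteq> {a, b}"
    proof
      fix x assume x: "x \<in> S - {a..b} \<union> ({a..b} - S)"
      show "x \<in> {a, b}"
      proof (rule ccontr)
        assume "x \<notin> {a, b}"
        then have "x \<noteq> a" "x \<noteq> b" by auto
        then show False using x S1 S2 by force
      qed
    qed
  qed auto
  also have "\<dots> = (LBINT x=a..b. f x)" using ab by (simp add: interval_integral_Icc)
  also have "\<dots> = P b - P a"
    using ab cf d by (intro interval_integral_FTC_finite) 
      (auto simp: has_real_derivative_iff_has_vector_derivative intro: has_vector_derivative_at_within)
  finally show "(LINT x:S|lborel. f x) = P b - P a" .
qed

lemma time_bound1:
  fixes F B P :: "real \<Rightarrow> real"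
  assumes t: "0 \<le> t" and Fi: "set_integrable lborel {0<..<t} F"
    and FB: "\<And>s. 0 < s \<Longrightarrow> s < t \<Longrightarrow> F s \<le> B s"
    and cB: "continuous_on {0..t} B"
    and d: "\<And>x. 0 \<le> x \<Longrightarrow> x \<le> t \<Longrightarrow> (P has_real_derivative B x) (at x)"
  shows "(LINT s:{0<..<t}|lborel. F s) \<le> P t - P 0"
proof -
  note f = ftc_set[OF t order_refl _ _ cB d]
  have "(LINT s:{0<..<t}|lborel. F s) \<le> (LINT s:{0<..<t}|lborel. B s)"
    by (rule set_integral_mono[OF Fi f(1)]) (auto intro: FB)
  also have "\<dots> = P t - P 0" by (rule f(2)) auto
  finally show ?thesis .
qed

lemma time_bound2:
  fixes F B1 B2 P1 P2 :: "real \<Rightarrow> real"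
  assumes t1: "0 < t1" "t1 \<le> t" and Fi: "set_integrable lborel {0<..<t} F"
    and FB1: "\<And>s. 0 < s \<Longrightarrow> s < t1 \<Longrightarrow> F s \<le> B1 s"
    and FB2: "\<And>s. t1 \<le> s \<Longrightarrow> s < t \<Longrightarrow> F s \<le> B2 s"
    and cB1: "continuous_on {0..t1} B1" and cB2: "continuous_on {t1..t} B2"
    and d1: "\<And>x. 0 \<le> x \<Longrightarrow> x \<le> t1 \<Longrightarrow> (P1 has_real_derivative B1 x) (at x)"
    and d2: "\<And>x. t1 \<le> x \<Longrightarrow> x \<le> t \<Longrightarrow> (P2 has_real_derivative B2 x) (at x)"
  shows "(LINT s:{0<..<t}|lborel. F s) \<le> (P1 t1 - P1 0) + (P2 t - P2 t1)"
proof -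
  note f1 = ftc_set[OF _ order_refl _ _ cB1 d1]
  note f2 = ftc_set[OF t1(2) _ _ _ cB2 d2, of "{t1..<t}"]
  have U: "{0<..<t} = {0<..<t1} \<union> {t1..<t}" using t1 by auto
  have i1: "set_integrable lborel {0<..<t1} F"
    by (rule set_integrable_subset[OF Fi]) (use t1 in auto)
  have i2: "set_integrable lborel {t1..<t} F"
    by (rule set_integrable_subset[OF Fi]) (use t1 in auto)
  have "(LINT s:{0<..<t}|lborel. F s) = (LINT s:{0<..<t1}|lborel. F s) + (LINT s:{t1..<t}|lborel. F s)"
    unfolding U by (rule set_integral_Un[OF _ i1 i2]) auto
  also have "(LINT s:{0<..<t1}|lborel. F s) \<le> (LINT s:{0<..<t1}|lborel. B1 s)"
    by (rule set_integral_mono[OF i1 f1(1)]) (use t1 in \<open>auto intro: FB1\<close>)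
  also have "(LINT s:{t1..<t}|lborel. F s) \<le> (LINT s:{t1..<t}|lborel. B2 s)"
    by (rule set_integral_mono[OF i2 f2(1)]) (auto intro: FB2)
  also have "(LINT s:{0<..<t1}|lborel. B1 s) = P1 t1 - P1 0" by (rule f1(2)) (use t1 in auto)
  also have "(LINT s:{t1..<t}|lborel. B2 s) = P2 t - P2 t1" by (rule f2(2)) auto
  finally show ?thesis by simp
qed

lemma le_by_fact_limit:
  fixes a b M t :: real
  assumes "\<And>k. a \<le> b + M * t ^ k / fact k"
  shows "a \<le> b"
proof -
  have "(\<lambda>k. t ^ k / fact k) \<longlonglongrightarrow> 0"
    using summable_exp[of t] by (intro summable_LIMSEQ_zero) (simp add: inverse_eq_divide)
  then have "(\<lambda>k. b + M * (t ^ k / fact k)) \<longlonglongrightarrow> b + M * 0"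
    by (intro tendsto_intros)
  then show ?thesis using assms
    by (intro tendsto_lowerbound[where F=sequentially]) (auto simp: mult.assoc times_divide_eq_right)
qed



lemma deriv_pow_fact:
  "((\<lambda>s. M * (s - a) ^ Suc k / fact (Suc k)) has_real_derivative M * (x - a) ^ k / fact k) (at x)"
proof -
  have d: "((\<lambda>s. (s - a)^Suc k) has_real_derivative real (Suc k) * (x-a)^k) (at x)"
    apply (auto intro!: derivative_eq_intros)
    by (cases k) (simp_all add: algebra_simps)
  have "((\<lambda>s. M * (s - a) ^ Suc k / fact (Suc k)) has_real_derivative M * (real (Suc k) * (x-a)^k) / fact (Suc k)) (at x)"
    by (intro DERIV_cdivide DERIV_cmult d)
  moreover have "M * (real (Suc k) * (x-a)^k) / fact (Suc k) = M * (x - a) ^ k / fact k"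
    by (simp add: fact_Suc del: of_nat_Suc)
  ultimately show ?thesis by simp
qed

lemma deriv_exp_c:
  "((\<lambda>s. c * exp s) has_real_derivative c * exp x) (at x)"
  by (auto intro!: derivative_eq_intros)

context
  fixes \<theta> \<epsilon> L :: real and w :: "real \<Rightarrow> real^'n \<Rightarrow> real"
  assumes th: "\<theta> > 0" and ep: "\<epsilon> > 0" and Lp: "L > 0"
    and ms: "mild_solution (\<lambda>u. pos_part (u - \<theta>)) (\<lambda>x. (\<theta> + \<epsilon>) * indicator (ball 0 L) x) w"
begin

abbreviation b0 :: "real^'n" where "b0 \<equiv> SOME b. b \<in> Basis"

lemma b0: "b0 \<in> Basis" by (rule SOME_Basis)

abbreviation Sw :: "real \<Rightarrow> real^'n \<Rightarrow> real" where
  "Sw t x \<equiv> (\<integral>y. heat_kernel t (x - y) * ((\<theta> + \<epsilon>) * indicator (ball 0 L) y) \<partial>lborel)"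

abbreviation Fw :: "real \<Rightarrow> real^'n \<Rightarrow> real \<Rightarrow> real" where
  "Fw t x s \<equiv> (\<integral>y. heat_kernel (t - s) (x - y) * pos_part (w s y - \<theta>) \<partial>lborel)"

lemma msE:
  assumes "t > 0"
  shows "integrable lborel (\<lambda>y. heat_kernel t (x - y) * ((\<theta> + \<epsilon>) * indicator (ball 0 L) y))"
    "\<And>s. 0 < s \<Longrightarrow> s < t \<Longrightarrow> integrable lborel (\<lambda>y. heat_kernel (t - s) (x - y) * pos_part (w s y - \<theta>))"
    "set_integrable lborel {0<..<t} (Fw t x)"
    "w t x = Sw t x + (LINT s:{0<..<t}|lborel. Fw t x s)"
proof -
  have H: "\<forall>t>0. \<forall>x.
        integrable lborel (\<lambda>y. heat_kernel t (x - y) * ((\<theta> + \<epsilon>) * indicator (ball 0 L) y)) \<and>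
        (\<forall>s\<in>{0<..<t}. integrable lborel (\<lambda>y. heat_kernel (t - s) (x - y) * pos_part (w s y - \<theta>))) \<and>
        set_integrable lborel {0<..<t} (Fw t x) \<and>
        w t x = Sw t x + (LINT s:{0<..<t}|lborel. Fw t x s)"
    using ms unfolding mild_solution_def by blast
  show "integrable lborel (\<lambda>y. heat_kernel t (x - y) * ((\<theta> + \<epsilon>) * indicator (ball 0 L) y))"
    using H assms by blast
  show "\<And>s. 0 < s \<Longrightarrow> s < t \<Longrightarrow> integrable lborel (\<lambda>y. heat_kernel (t - s) (x - y) * pos_part (w s y - \<theta>))"
  proof -
    fix s assume "0 < s" "s < t"
    then have "s \<in> {0<..<t}" by simp
    then show "integrable lborel (\<lambda>y. heat_kernel (t - s) (x - y) * pos_part (w s y - \<theta>))"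
      using H assms by blast
  qed
  show "set_integrable lborel {0<..<t} (Fw t x)"
    using H assms by blast
  show "w t x = Sw t x + (LINT s:{0<..<t}|lborel. Fw t x s)"
    using H assms by blast
qed

lemma msB: "T > 0 \<Longrightarrow> \<exists>M. \<forall>t\<in>{0<..T}. \<forall>x. \<bar>w t x\<bar> \<le> M"
  using ms unfolding mild_solution_def by auto

lemma w0_le: "(\<theta> + \<epsilon>) * indicator (ball 0 L) y \<le> (\<theta> + \<epsilon>) * indicator {-L<..<L} (y \<bullet> b0)"
proof -
  have "y \<in> ball 0 L \<Longrightarrow> \<bar>y \<bullet> b0\<bar> < L"
    using Basis_le_norm[OF b0, of y] by (auto simp: dist_norm)
  then show ?thesis using th ep by (auto split: split_indicator)
qed

lemma Sw_nonneg: "t > 0 \<Longrightarrow> 0 \<le> Sw t x"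
  using th ep by (intro integral_nonneg_AE) (auto intro!: AE_I2 heat_kernel_nonneg mult_nonneg_nonneg)

lemma Sw_le1: "t > 0 \<Longrightarrow> Sw t x \<le> \<theta> + \<epsilon>"
  by (rule heat_bound_const[OF _ _ msE(1)]) (use th ep in \<open>auto split: split_indicator\<close>)

lemma Sw_ind: "t > 0 \<Longrightarrow> Sw t x \<le> (\<theta> + \<epsilon>) * (\<integral>u. normal_density (x \<bullet> b0) (sqrt (2*t)) u * indicator {-L<..<L} u \<partial>lborel)"
  by (rule heat_bound[OF _ b0 _ _ _ _ msE(1) w0_le, where C=1]) (use th ep in \<open>auto split: split_indicator\<close>)

lemma Sw_le2: "t > 0 \<Longrightarrow> Sw t x \<le> (\<theta> + \<epsilon>) * (1 - normal_density 0 (sqrt (2*t)) (L+1))"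
  using Sw_ind[of t x] nd_ind_escape[of "sqrt (2*t)" L "x \<bullet> b0"] Lp th ep
  by (smt (verit) mult_left_mono real_sqrt_gt_zero)

lemma Sw_le3: "t > 0 \<Longrightarrow> Sw t x \<le> (\<theta> + \<epsilon>) * (2 * L / sqrt (4 * pi * t))"
proof -
  assume t: "t > 0"
  have "(\<integral>u. normal_density (x \<bullet> b0) (sqrt (2*t)) u * indicator {-L<..<L} u \<partial>lborel) \<le> (L - - L) / sqrt (2 * pi * (sqrt (2*t))\<^sup>2)"
    by (rule nd_ind_le_len) (use t Lp in auto)
  also have "\<dots> = 2 * L / sqrt (4 * pi * t)" using t by simp
  finally show ?thesis using Sw_ind[OF t, of x] th ep by (smt (verit) mult_left_mono)
qed

lemma Sw_le4: "t > 0 \<Longrightarrow> R > 0 \<Longrightarrow> \<bar>x \<bullet> b0\<bar> \<ge> L + R \<Longrightarrow> Sw t x \<le> (\<theta> + \<epsilon>) * (2 * t / R\<^sup>2)"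
proof -
  assume t: "t > 0" and R: "R > 0" and far: "\<bar>x \<bullet> b0\<bar> \<ge> L + R"
  have "(\<integral>u. normal_density (x \<bullet> b0) (sqrt (2*t)) u * indicator {-L<..<L} u \<partial>lborel) \<le> (sqrt (2*t))\<^sup>2 / R\<^sup>2"
    by (rule nd_ind_far[OF _ R far]) (use t in auto)
  also have "\<dots> = 2 * t / R\<^sup>2" using t by simp
  finally show ?thesis using Sw_ind[OF t, of x] th ep by (smt (verit) mult_left_mono)
qed

lemma Fw_le_const:
  assumes "0 < s" "s < t" "c \<ge> 0" "\<And>y. pos_part (w s y - \<theta>) \<le> c"
  shows "Fw t x s \<le> c"
  by (rule heat_bound_const[OF _ _ msE(2)]) (use assms in auto)

lemma Fw_le_slab:
  assumes "0 < s" "s < t" "c \<ge> 0" "K \<ge> 0"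
    "\<And>y. pos_part (w s y - \<theta>) \<le> c * indicator {-K<..<K} (y \<bullet> b0)"
  shows "Fw t x s \<le> c * (2 * K / sqrt (4 * pi * (t - s)))"
proof -
  have "Fw t x s \<le> c * (\<integral>u. normal_density (x \<bullet> b0) (sqrt (2*(t-s))) u * indicator {-K<..<K} u \<partial>lborel)"
    by (rule heat_bound[OF _ b0 _ _ _ _ msE(2) assms(5), where C=1]) (use assms in \<open>auto split: split_indicator\<close>)
  also have "(\<integral>u. normal_density (x \<bullet> b0) (sqrt (2*(t-s))) u * indicator {-K<..<K} u \<partial>lborel) \<le> (K - - K) / sqrt (2 * pi * (sqrt (2*(t-s)))\<^sup>2)"
    by (rule nd_ind_le_len) (use assms in auto)
  also have "\<dots> = 2 * K / sqrt (4 * pi * (t - s))" using assms by simp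
  finally show ?thesis using assms by (smt (verit) mult_left_mono)
qed

lemma pos_part_le: "a \<le> c \<Longrightarrow> 0 \<le> c \<Longrightarrow> pos_part a \<le> c"
  by (simp add: pos_part_def)

lemma phase1: 
  assumes t: "t > 0"
  shows "w t x \<le> Sw t x + \<epsilon> * (exp t - 1)"
proof -
  obtain M where M: "\<forall>t'\<in>{0<..t}. \<forall>x. \<bar>w t' x\<bar> \<le> M" using msB[OF t] by blast
  have M0: "M \<ge> 0" using M t by (meson abs_ge_zero greaterThanAtMost_iff order.trans order_refl)
  have claim: "\<forall>t'\<in>{0<..t}. \<forall>x. w t' x \<le> Sw t' x + \<epsilon> * (exp t' - 1) + M * t' ^ k / fact k" for k
  proof (induction k)
    case 0
    show ?case
    proof (intro ballI allI)
      fix t' x assume t': "t' \<in> {0<..t}"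
      have "w t' x \<le> M" using M t' by (meson abs_ge_self order.trans)
      moreover have "0 \<le> Sw t' x" using t' by (intro Sw_nonneg) auto
      moreover have "0 \<le> \<epsilon> * (exp t' - 1)" using ep t' by auto
      ultimately show "w t' x \<le> Sw t' x + \<epsilon> * (exp t' - 1) + M * t' ^ 0 / fact 0" by simp
    qed
  next
    case (Suc k)
    show ?case
    proof (intro ballI allI)
      fix t' x assume t': "t' \<in> {0<..t}"
      define B where "B s = \<epsilon> * exp s + M * (s - 0) ^ k / fact k" for s
      define P where "P s = \<epsilon> * exp s + M * (s - 0) ^ Suc k / fact (Suc k)" for s
      have "(LINT s:{0<..<t'}|lborel. Fw t' x s) \<le> P t' - P 0"
      proof (rule time_bound1[OF _ msE(3)])
        show "0 \<le> t'" "0 < t'" using t' by auto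
        show "continuous_on {0..t'} B" unfolding B_def by (intro continuous_intros) auto
        show "(P has_real_derivative B s) (at s)" for s
          unfolding P_def B_def by (intro DERIV_add deriv_exp_c deriv_pow_fact)
        fix s assume s: "0 < s" "s < t'"
        show "Fw t' x s \<le> B s"
        proof (rule Fw_le_const)
          show "0 < s" "s < t'" using s by auto
          show "0 \<le> B s" unfolding B_def using ep M0 s by auto
          fix y
          have "w s y \<le> Sw s y + \<epsilon> * (exp s - 1) + M * s ^ k / fact k"
            using Suc.IH s t' by auto
          moreover have "Sw s y \<le> \<theta> + \<epsilon>" using s by (intro Sw_le1) auto
          ultimately have "w s y - \<theta> \<le> B s" unfolding B_def by (simp add: algebra_simps)
          then show "pos_part (w s y - \<theta>) \<le> B s" using \<open>0 \<le> B s\<close> by (rule pos_part_le)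
        qed
      qed
      then show "w t' x \<le> Sw t' x + \<epsilon> * (exp t' - 1) + M * t' ^ Suc k / fact (Suc k)"
        using msE(4)[of t' x] t' unfolding P_def by (simp add: algebra_simps)
    qed
  qed
  show ?thesis
    by (rule le_by_fact_limit[where M=M and t=t]) (use claim t in auto)
qed

lemma gbound1: "s > 0 \<Longrightarrow> pos_part (w s y - \<theta>) \<le> \<epsilon> * exp s"
  using phase1[of s y] Sw_le1[of s y] ep
  by (intro pos_part_le) (auto simp: algebra_simps)

lemma gsupp:
  assumes s: "0 < s" "s \<le> t1" and R: "R > 0" and supp: "(\<theta> + \<epsilon>) * (2 * t1 / R\<^sup>2) + \<epsilon> * exp t1 \<le> \<theta>"
  shows "pos_part (w s y - \<theta>) \<le> \<epsilon> * exp s * indicator {-(L+R)<..<L+R} (y \<bullet> b0)"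
proof (cases "\<bar>y \<bullet> b0\<bar> < L + R")
  case True
  then have "y \<bullet> b0 \<in> {-(L+R)<..<L+R}" by auto
  then show ?thesis using gbound1[OF s(1), of y] by simp
next
  case False
  then have far: "\<bar>y \<bullet> b0\<bar> \<ge> L + R" by simp
  have "Sw s y \<le> (\<theta> + \<epsilon>) * (2 * s / R\<^sup>2)" by (rule Sw_le4[OF s(1) R far])
  also have "\<dots> \<le> (\<theta> + \<epsilon>) * (2 * t1 / R\<^sup>2)"
    using s th ep R by (intro mult_left_mono divide_right_mono) auto
  finally have "w s y \<le> (\<theta> + \<epsilon>) * (2 * t1 / R\<^sup>2) + \<epsilon> * (exp s - 1)"
    using phase1[OF s(1), of y] by simp
  moreover have "\<epsilon> * (exp s - 1) \<le> \<epsilon> * (exp t1 - 1)" using s ep by (intro mult_left_mono) auto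
  moreover have "\<epsilon> * (exp t1 - 1) = \<epsilon> * exp t1 - \<epsilon>" by (simp add: algebra_simps)
  ultimately have "w s y - \<theta> \<le> 0" using supp ep by linarith
  moreover have "y \<bullet> b0 \<notin> {-(L+R)<..<L+R}" using False by auto
  ultimately show ?thesis by (simp add: pos_part_def)
qed

lemma step_int:
  assumes t1: "0 < t1" "t1 \<le> t" and M0: "M \<ge> 0" and c: "c \<ge> 0"
    and H: "\<And>s y. t1 \<le> s \<Longrightarrow> s < t \<Longrightarrow> w s y \<le> \<theta> + M * (s - t1) ^ k / fact k"
    and FB1: "\<And>s. 0 < s \<Longrightarrow> s < t1 \<Longrightarrow> Fw t x s \<le> (c * \<epsilon>) * exp s"
  shows "(LINT s:{0<..<t}|lborel. Fw t x s) \<le> (c * \<epsilon>) * (exp t1 - 1) + M * (t - t1) ^ Suc k / fact (Suc k)"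
proof -
  have "(LINT s:{0<..<t}|lborel. Fw t x s) \<le> ((c * \<epsilon>) * exp t1 - (c * \<epsilon>) * exp 0) + 
     (M * (t - t1) ^ Suc k / fact (Suc k) - M * (t1 - t1) ^ Suc k / fact (Suc k))"
  proof (rule time_bound2[OF t1 msE(3) FB1])
    show "0 < t" using t1 by simp
    show "continuous_on {0..t1} (\<lambda>s. (c * \<epsilon>) * exp s)" by (intro continuous_intros)
    show "continuous_on {t1..t} (\<lambda>s. M * (s - t1) ^ k / fact k)" by (intro continuous_intros) auto
    show "((\<lambda>s. (c * \<epsilon>) * exp s) has_real_derivative (c * \<epsilon>) * exp s) (at s)" for s
      by (rule deriv_exp_c)
    show "((\<lambda>s. M * (s - t1) ^ Suc k / fact (Suc k)) has_real_derivative M * (s - t1) ^ k / fact k) (at s)" for s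
      by (rule deriv_pow_fact)
    fix s assume s: "t1 \<le> s" "s < t"
    show "Fw t x s \<le> M * (s - t1) ^ k / fact k"
    proof (rule Fw_le_const)
      show "0 < s" "s < t" using s t1 by auto
      show "0 \<le> M * (s - t1) ^ k / fact k" using M0 s by auto
      fix y show "pos_part (w s y - \<theta>) \<le> M * (s - t1) ^ k / fact k"
        using H[OF s, of y] \<open>0 \<le> M * (s - t1) ^ k / fact k\<close> by (intro pos_part_le) auto
    qed
  qed (use t1 in auto)
  then show ?thesis by (simp add: right_diff_distrib)
qed

lemma phase2_step:
  assumes t1: "0 < t1" "t1 \<le> t" and M0: "M \<ge> 0" and R: "R > 0"
    and supp: "(\<theta> + \<epsilon>) * (2 * t1 / R\<^sup>2) + \<epsilon> * exp t1 \<le> \<theta>"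
    and H: "\<And>s y. t1 \<le> s \<Longrightarrow> s < t \<Longrightarrow> w s y \<le> \<theta> + M * (s - t1) ^ k / fact k"
  shows "w t x \<le> (\<theta> + \<epsilon>) * (1 - normal_density 0 (sqrt (2*t)) (L+1)) + \<epsilon> * exp t1 + M * (t - t1) ^ Suc k / fact (Suc k)"
    and "t > t1 \<Longrightarrow> w t x \<le> (\<theta> + \<epsilon>) * (2 * L / sqrt (4 * pi * t)) + \<epsilon> * exp t1 * (2 * (L + R) / sqrt (4 * pi * (t - t1))) + M * (t - t1) ^ Suc k / fact (Suc k)"
proof -
  have t: "t > 0" using t1 by simp
  have "(LINT s:{0<..<t}|lborel. Fw t x s) \<le> (1 * \<epsilon>) * (exp t1 - 1) + M * (t - t1) ^ Suc k / fact (Suc k)"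
  proof (rule step_int[OF t1 M0 _ H])
    fix s assume s: "0 < s" "s < t1"
    show "Fw t x s \<le> (1 * \<epsilon>) * exp s"
      using s t1 ep gbound1[of s] by (intro Fw_le_const) auto
  qed auto
  then show "w t x \<le> (\<theta> + \<epsilon>) * (1 - normal_density 0 (sqrt (2*t)) (L+1)) + \<epsilon> * exp t1 + M * (t - t1) ^ Suc k / fact (Suc k)"
    using msE(4)[OF t, of x] Sw_le2[OF t, of x] ep by (simp add: algebra_simps)
next
  assume tt: "t > t1"
  have t: "t > 0" using t1 by simp
  define c2 where "c2 = 2 * (L + R) / sqrt (4 * pi * (t - t1))"
  have c2: "c2 \<ge> 0" unfolding c2_def using Lp R tt by auto
  have "(LINT s:{0<..<t}|lborel. Fw t x s) \<le> (c2 * \<epsilon>) * (exp t1 - 1) + M * (t - t1) ^ Suc k / fact (Suc k)"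
  proof (rule step_int[OF t1 M0 c2 H])
    fix s assume s: "0 < s" "s < t1"
    have "Fw t x s \<le> (\<epsilon> * exp s) * (2 * (L + R) / sqrt (4 * pi * (t - s)))"
      using s t1 ep Lp R by (intro Fw_le_slab gsupp[OF _ _ R supp]) auto
    also have "\<dots> \<le> (\<epsilon> * exp s) * c2" unfolding c2_def
      using s tt ep Lp R by (intro mult_left_mono divide_left_mono) auto
    finally show "Fw t x s \<le> (c2 * \<epsilon>) * exp s" by (simp add: algebra_simps)
  qed auto
  moreover have "(c2 * \<epsilon>) * (exp t1 - 1) \<le> \<epsilon> * exp t1 * c2" using c2 ep
    by (simp add: algebra_simps)
  ultimately show "w t x \<le> (\<theta> + \<epsilon>) * (2 * L / sqrt (4 * pi * t)) + \<epsilon> * exp t1 * (2 * (L + R) / sqrt (4 * pi * (t - t1))) + M * (t - t1) ^ Suc k / fact (Suc k)"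
    using msE(4)[OF t, of x] Sw_le3[OF t, of x] unfolding c2_def by linarith
qed

lemma phase2:
  assumes t1: "0 < t1" and R: "R > 0"
    and supp: "(\<theta> + \<epsilon>) * (2 * t1 / R\<^sup>2) + \<epsilon> * exp t1 \<le> \<theta>"
    and reg: "\<And>t. t \<ge> t1 \<Longrightarrow> (\<theta> + \<epsilon>) * (1 - normal_density 0 (sqrt (2*t)) (L+1)) + \<epsilon> * exp t1 \<le> \<theta> \<or>
        (t > t1 \<and> (\<theta> + \<epsilon>) * (2 * L / sqrt (4 * pi * t)) + \<epsilon> * exp t1 * (2 * (L + R) / sqrt (4 * pi * (t - t1))) \<le> \<theta>)"
  shows "\<And>t x. t \<ge> t1 \<Longrightarrow> w t x \<le> \<theta>"
    and "\<And>t x. t > t1 \<Longrightarrow> w t x \<le> (\<theta> + \<epsilon>) * (2 * L / sqrt (4 * pi * t)) + \<epsilon> * exp t1 * (2 * (L + R) / sqrt (4 * pi * (t - t1)))"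
proof -
  show le: "w t x \<le> \<theta>" if tt: "t \<ge> t1" for t x
  proof -
    have Tm: "t > 0" using tt t1 by simp
    obtain M where M: "\<forall>t'\<in>{0<..t}. \<forall>x. \<bar>w t' x\<bar> \<le> M" using msB[OF Tm] by blast
    have M0: "M \<ge> 0" using M Tm by (meson abs_ge_zero greaterThanAtMost_iff order.trans order_refl)
    have claim: "\<forall>t'\<in>{t1..t}. \<forall>x. w t' x \<le> \<theta> + M * (t' - t1) ^ k / fact k" for k
    proof (induction k)
      case 0
      show ?case
      proof (intro ballI allI)
        fix t' x assume t': "t' \<in> {t1..t}"
        have "w t' x \<le> M" using M t' t1 by (meson abs_ge_self order.trans greaterThanAtMost_iff atLeastAtMost_iff less_le_trans)
        then show "w t' x \<le> \<theta> + M * (t' - t1) ^ 0 / fact 0" using th by simp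
      qed
    next
      case (Suc k)
      show ?case
      proof (intro ballI allI)
        fix t' x assume t': "t' \<in> {t1..t}"
        have H: "\<And>s y. t1 \<le> s \<Longrightarrow> s < t' \<Longrightarrow> w s y \<le> \<theta> + M * (s - t1) ^ k / fact k"
          using Suc.IH t' by auto
        note st = phase2_step[where t=t' and x=x, OF t1 _ M0 R supp H]
        have r: "(\<theta> + \<epsilon>) * (1 - normal_density 0 (sqrt (2*t')) (L+1)) + \<epsilon> * exp t1 \<le> \<theta> \<or>
          (t' > t1 \<and> (\<theta> + \<epsilon>) * (2 * L / sqrt (4 * pi * t')) + \<epsilon> * exp t1 * (2 * (L + R) / sqrt (4 * pi * (t' - t1))) \<le> \<theta>)"
          using reg[of t'] t' by auto
        from r show "w t' x \<le> \<theta> + M * (t' - t1) ^ Suc k / fact (Suc k)"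
        proof (elim disjE conjE)
          assume "(\<theta> + \<epsilon>) * (1 - normal_density 0 (sqrt (2*t')) (L+1)) + \<epsilon> * exp t1 \<le> \<theta>"
          then show ?thesis using st(1) t' by auto
        next
          assume "t' > t1" "(\<theta> + \<epsilon>) * (2 * L / sqrt (4 * pi * t')) + \<epsilon> * exp t1 * (2 * (L + R) / sqrt (4 * pi * (t' - t1))) \<le> \<theta>"
          then show ?thesis using st(2) t' by auto
        qed
      qed
    qed
    show ?thesis
      by (rule le_by_fact_limit[where M=M and t="t - t1"]) (use claim tt in auto)
  qed
  fix t x assume tt: "t > t1"
  have H: "\<And>s y. t1 \<le> s \<Longrightarrow> s < t \<Longrightarrow> w s y \<le> \<theta> + 0 * (s - t1) ^ 0 / fact 0"
    using le by simp
  show "w t x \<le> (\<theta> + \<epsilon>) * (2 * L / sqrt (4 * pi * t)) + \<epsilon> * exp t1 * (2 * (L + R) / sqrt (4 * pi * (t - t1)))"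
    using phase2_step(2)[OF t1 _ order_refl R supp H tt] tt by simp
qed

lemma w_nonneg: "t > 0 \<Longrightarrow> 0 \<le> w t x"
proof -
  assume t: "t > 0"
  have "0 \<le> (LINT s:{0<..<t}|lborel. Fw t x s)"
    unfolding set_lebesgue_integral_def
    by (intro integral_nonneg_AE AE_I2)
       (auto split: split_indicator intro!: integral_nonneg_AE AE_I2 mult_nonneg_nonneg heat_kernel_nonneg simp: pos_part_def)
  then show ?thesis using msE(4)[OF t, of x] Sw_nonneg[OF t, of x] by simp
qed

end


lemma asym_conds:
  fixes \<theta> \<delta> \<gamma> :: real
  assumes th: "\<theta> > 0" and d: "\<delta> > \<theta>" and g: "0 < \<gamma>" "\<gamma> < 1"
  shows "eventually (\<lambda>l. l \<ge> 1 \<and> l \<ge> 1 / (2 * \<gamma>) \<and>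
      (\<theta> + 1) * \<gamma> / l + exp (- (1 - \<gamma> / 2) * l) \<le> \<theta> \<and>
      2 * sqrt (4 * pi) * exp 2 * l\<^sup>2 * exp (- (1 - \<gamma>) * l) \<le> \<theta> \<and>
      (\<theta> + 1) * 2 / l + 4 * exp (- (1 - \<gamma> / 2) * l) / l \<le> \<theta> \<and>
      \<gamma> * l / 2 \<le> l + ln (\<delta> - \<theta>)) at_top"
proof -
  have e1: "eventually (\<lambda>l. l \<ge> max 1 (1 / (2 * \<gamma>))) at_top" by (rule eventually_ge_at_top)
  have c1: "1 - \<gamma> / 2 > 0" "1 - \<gamma> > 0" using g by auto
  have "((\<lambda>l. (\<theta> + 1) * \<gamma> / l + exp (- (1 - \<gamma> / 2) * l)) \<longlongrightarrow> 0) at_top"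
    using c1 by real_asymp
  then have e2: "eventually (\<lambda>l. (\<theta> + 1) * \<gamma> / l + exp (- (1 - \<gamma> / 2) * l) < \<theta>) at_top"
    using th by (rule order_tendstoD(2))
  have "((\<lambda>l. 2 * sqrt (4 * pi) * exp 2 * l\<^sup>2 * exp (- (1 - \<gamma>) * l)) \<longlongrightarrow> 0) at_top"
    using c1 by real_asymp
  then have e3: "eventually (\<lambda>l. 2 * sqrt (4 * pi) * exp 2 * l\<^sup>2 * exp (- (1 - \<gamma>) * l) < \<theta>) at_top"
    using th by (rule order_tendstoD(2))
  have "((\<lambda>l. (\<theta> + 1) * 2 / l + 4 * exp (- (1 - \<gamma> / 2) * l) / l) \<longlongrightarrow> 0) at_top"
    using c1 by real_asymp
  then have e4: "eventually (\<lambda>l. (\<theta> + 1) * 2 / l + 4 * exp (- (1 - \<gamma> / 2) * l) / l < \<theta>) at_top"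
    using th by (rule order_tendstoD(2))
  have "filterlim (\<lambda>l. (1 - \<gamma> / 2) * l + ln (\<delta> - \<theta>)) at_top at_top"
    using c1 by real_asymp
  then have e5: "eventually (\<lambda>l. (1 - \<gamma> / 2) * l + ln (\<delta> - \<theta>) \<ge> 0) at_top"
    by (simp add: filterlim_at_top)
  show ?thesis
    using e1 e2 e3 e4 e5
    by eventually_elim (auto simp: algebra_simps)
qed

lemma bound_tendsto:
  "((\<lambda>t::real. a * (b / sqrt (4 * pi * t)) + c * (d / sqrt (4 * pi * (t - e)))) \<longlongrightarrow> 0) at_top"
  by real_asymp

theorem proposition2p1:
  fixes \<theta> \<delta> \<gamma> :: real
  assumes "\<theta> > 0" and "\<delta> > \<theta>" and "0 < \<gamma>" and "\<gamma> < 1"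
  shows "\<exists>\<epsilon>0>0. \<forall>\<epsilon>. 0 < \<epsilon> \<and> \<epsilon> < \<epsilon>0 \<longrightarrow>
           (\<forall>L. 0 < L \<and> L < \<gamma> * ln (1 / \<epsilon>) \<longrightarrow>
             (\<forall>w :: real \<Rightarrow> real^'n \<Rightarrow> real.
                mild_solution (\<lambda>u. pos_part (u - \<theta>))
                  (\<lambda>x. (\<theta> + \<epsilon>) * indicator (ball 0 L) x) w \<longrightarrow>
                (\<forall>x. w (ln ((\<delta> - \<theta>) / \<epsilon>)) x \<le> \<theta>) \<and>
                (\<forall>e>0. \<exists>T. \<forall>t\<ge>T. \<forall>x. \<bar>w t x\<bar> < e)))"
proof -
  note th = assms(1) and dt = assms(2) and g = assms(3,4)
  obtain l0 where l0: "\<And>l. l \<ge> l0 \<Longrightarrow> l \<ge> 1 \<and> l \<ge> 1 / (2 * \<gamma>) \<and>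
      (\<theta> + 1) * \<gamma> / l + exp (- (1 - \<gamma> / 2) * l) \<le> \<theta> \<and>
      2 * sqrt (4 * pi) * exp 2 * l\<^sup>2 * exp (- (1 - \<gamma>) * l) \<le> \<theta> \<and>
      (\<theta> + 1) * 2 / l + 4 * exp (- (1 - \<gamma> / 2) * l) / l \<le> \<theta> \<and>
      \<gamma> * l / 2 \<le> l + ln (\<delta> - \<theta>)"
    using asym_conds[OF th dt g] unfolding eventually_at_top_linorder by blast
  define \<epsilon>0 where "\<epsilon>0 = exp (- max l0 1)"
  have main: "(\<forall>x. w (ln ((\<delta> - \<theta>) / \<epsilon>)) x \<le> \<theta>) \<and> (\<forall>e>0. \<exists>T. \<forall>t\<ge>T. \<forall>x. \<bar>w t x\<bar> < e)"
    if ep: "0 < \<epsilon> \<and> \<epsilon> < \<epsilon>0" and LL: "0 < L \<and> L < \<gamma> * ln (1 / \<epsilon>)"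
      and ms: "mild_solution (\<lambda>u. pos_part (u - \<theta>)) (\<lambda>x. (\<theta> + \<epsilon>) * indicator (ball 0 L) x) w"
    for \<epsilon> L :: real and w :: "real \<Rightarrow> real^'n \<Rightarrow> real"
  proof -
    define l where "l = ln (1 / \<epsilon>)"
    have ep0: "\<epsilon> > 0" using ep by simp
    have eps: "\<epsilon> = exp (- l)" unfolding l_def using ep0 by (simp add: ln_div)
    have "ln \<epsilon> < ln \<epsilon>0" using ep by (intro ln_less_cancel_iff[THEN iffD2]) (auto simp: \<epsilon>0_def)
    then have "ln \<epsilon> < - max l0 1" by (simp add: \<epsilon>0_def)
    moreover have "l = - ln \<epsilon>" unfolding l_def using ep0 by (simp add: ln_div)
    ultimately have lgt: "l > max l0 1" by linarith
    then have Q: "l \<ge> 1 \<and> l \<ge> 1 / (2 * \<gamma>) \<and>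
      (\<theta> + 1) * \<gamma> / l + exp (- (1 - \<gamma> / 2) * l) \<le> \<theta> \<and>
      2 * sqrt (4 * pi) * exp 2 * l\<^sup>2 * exp (- (1 - \<gamma>) * l) \<le> \<theta> \<and>
      (\<theta> + 1) * 2 / l + 4 * exp (- (1 - \<gamma> / 2) * l) / l \<le> \<theta> \<and>
      \<gamma> * l / 2 \<le> l + ln (\<delta> - \<theta>)" by (intro l0) simp
    have l1: "l \<ge> 1" using Q by simp
    have lg: "2 * \<gamma> * l \<ge> 1" using Q g by (simp add: field_simps)
    have Lp: "L > 0" and Ll: "L < \<gamma> * l" using LL unfolding l_def by auto
    have ep1: "\<epsilon> < 1" using eps l1 by simp
    have l4sq: "sqrt (l ^ 4) = l\<^sup>2"
    proof -
      have "sqrt (l ^ 4) = sqrt ((l\<^sup>2)\<^sup>2)" by (simp add: power_mult[symmetric])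
      also have "\<dots> = \<bar>l\<^sup>2\<bar>" by (rule real_sqrt_abs)
      also have "\<dots> = l\<^sup>2" by simp
      finally show ?thesis .
    qed
    define t1 where "t1 = \<gamma> * l / 2"
    have t1p: "t1 > 0" unfolding t1_def using g l1 by simp
    have Rp: "l > 0" using l1 by simp
    have eE: "\<epsilon> * exp t1 = exp (- (1 - \<gamma> / 2) * l)"
      unfolding eps t1_def by (simp add: exp_add[symmetric] algebra_simps)
    have supp: "(\<theta> + \<epsilon>) * (2 * t1 / l\<^sup>2) + \<epsilon> * exp t1 \<le> \<theta>"
    proof -
      have "2 * t1 / l\<^sup>2 = \<gamma> / l" unfolding t1_def using Rp by (simp add: power2_eq_square)
      moreover have "(\<theta> + \<epsilon>) * (\<gamma> / l) \<le> (\<theta> + 1) * \<gamma> / l"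
        using ep1 g Rp by (simp add: divide_right_mono mult_right_mono)
      ultimately show ?thesis using Q eE by simp
    qed
    have reg: "(\<theta> + \<epsilon>) * (1 - normal_density 0 (sqrt (2*t)) (L+1)) + \<epsilon> * exp t1 \<le> \<theta> \<or>
        (t > t1 \<and> (\<theta> + \<epsilon>) * (2 * L / sqrt (4 * pi * t)) + \<epsilon> * exp t1 * (2 * (L + l) / sqrt (4 * pi * (t - t1))) \<le> \<theta>)"
      if tt: "t \<ge> t1" for t
    proof (cases "t \<le> l ^ 4")
      case True
      have tp: "t > 0" using tt t1p by simp
      define \<eta> where "\<eta> = normal_density 0 (sqrt (2*t)) (L+1)"
      have eta: "\<eta> = exp (- (L+1)\<^sup>2 / (4 * t)) / sqrt (4 * pi * t)"
        unfolding \<eta>_def normal_density_def using tp by (simp add: mult.assoc)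
      have h1: "(L+1)\<^sup>2 / (4 * t) \<le> \<gamma> * l / 2 + 2"
      proof -
        have "(L+1)\<^sup>2 \<le> (\<gamma> * l + 1)\<^sup>2" using Lp Ll by (intro power_mono) auto
        then have "(L+1)\<^sup>2 / (4 * t) \<le> (\<gamma> * l + 1)\<^sup>2 / (4 * t1)"
          using tt t1p by (intro frac_le) auto
        also have "(\<gamma> * l + 1)\<^sup>2 / (4 * t1) = \<gamma> * l / 2 + 1 + 1 / (2 * \<gamma> * l)"
          unfolding t1_def using g Rp by (simp add: field_simps power2_eq_square)
        also have "1 / (2 * \<gamma> * l) \<le> 1" using lg by simp
        finally show ?thesis by simp
      qed
      have h3: "sqrt (4 * pi * t) \<le> sqrt (4 * pi) * l\<^sup>2"
      proof -
        have "sqrt (4 * pi * t) \<le> sqrt (4 * pi * l ^ 4)" using True by simp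
        also have "\<dots> = sqrt (4 * pi) * l\<^sup>2"
          by (simp add: real_sqrt_mult l4sq)
        finally show ?thesis .
      qed
      have h4: "\<eta> \<ge> exp (- (\<gamma> * l / 2 + 2)) / (sqrt (4 * pi) * l\<^sup>2)"
        unfolding eta using h1 h3 tp by (intro frac_le) auto
      have h5: "\<epsilon> + \<epsilon> * exp t1 \<le> 2 * exp (- (1 - \<gamma> / 2) * l)"
      proof -
        have "\<epsilon> \<le> exp (- (1 - \<gamma> / 2) * l)" unfolding eps using g Rp mult_pos_pos[of \<gamma> l] by (simp add: algebra_simps)
        then show ?thesis using eE by simp
      qed
      have h6: "2 * exp (- (1 - \<gamma> / 2) * l) \<le> \<theta> * (exp (- (\<gamma> * l / 2 + 2)) / (sqrt (4 * pi) * l\<^sup>2))"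
      proof -
        have "exp (- (1 - \<gamma> / 2) * l) = exp 2 * exp (- (1 - \<gamma>) * l) * exp (- (\<gamma> * l / 2 + 2))"
        proof -
          have e: "exp 2 * exp (- (1 - \<gamma>) * l) * exp (- (\<gamma> * l / 2 + 2)) = exp (2 + (- (1 - \<gamma>) * l) + (- (\<gamma> * l / 2 + 2)))"
            by (simp only: exp_add)
          have ar: "2 + (- (1 - \<gamma>) * l) + (- (\<gamma> * l / 2 + 2)) = - (1 - \<gamma> / 2) * l"
            by (simp add: algebra_simps)
          show ?thesis unfolding e ar ..
        qed
        then have "2 * exp (- (1 - \<gamma> / 2) * l) * (sqrt (4 * pi) * l\<^sup>2) =
            (2 * sqrt (4 * pi) * exp 2 * l\<^sup>2 * exp (- (1 - \<gamma>) * l)) * exp (- (\<gamma> * l / 2 + 2))"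
          by (simp add: algebra_simps)
        also have "\<dots> \<le> \<theta> * exp (- (\<gamma> * l / 2 + 2))"
          using Q by (intro mult_right_mono) auto
        finally show ?thesis using Rp by (simp add: field_simps)
      qed
      have "\<theta> * \<eta> \<le> (\<theta> + \<epsilon>) * \<eta>" using ep0 unfolding \<eta>_def by (simp add: mult_right_mono)
      moreover have "\<theta> * (exp (- (\<gamma> * l / 2 + 2)) / (sqrt (4 * pi) * l\<^sup>2)) \<le> \<theta> * \<eta>"
        using h4 th by (intro mult_left_mono) auto
      ultimately have "\<epsilon> + \<epsilon> * exp t1 \<le> (\<theta> + \<epsilon>) * \<eta>" using h5 h6 by linarith
      then have "(\<theta> + \<epsilon>) * (1 - \<eta>) + \<epsilon> * exp t1 \<le> \<theta>" by (simp add: algebra_simps)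
      then show ?thesis unfolding \<eta>_def by simp
    next
      case False
      then have tl: "t > l ^ 4" by simp
      have l4: "l \<le> l ^ 4" using power_increasing[of 1 4 l] l1 by simp
      have gl: "\<gamma> * l \<le> 1 * l" by (rule mult_right_mono) (use g Rp in auto)
      have t1l: "t1 \<le> l / 2" unfolding t1_def using gl by simp
      have tt1: "t > t1" using tl l4 t1l Rp by linarith
      have tp: "t > 0" using tt1 t1p by simp
      have l2p: "l\<^sup>2 > 0" using Rp by simp
      have pi4: "4 * pi \<ge> 2" using pi_gt3 by simp
      have s1: "sqrt (4 * pi * t) \<ge> l\<^sup>2"
      proof -
        have "2 * t \<le> 4 * pi * t" by (rule mult_right_mono[OF pi4]) (use tp in simp)
        moreover have "l ^ 4 \<le> 2 * t" using tl tp by simp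
        ultimately have "l ^ 4 \<le> 4 * pi * t" by (rule order_trans[rotated])
        then have "sqrt (l ^ 4) \<le> sqrt (4 * pi * t)" by (rule real_sqrt_le_mono)
        then show ?thesis using l4sq by simp
      qed
      have s2: "sqrt (4 * pi * (t - t1)) \<ge> l\<^sup>2"
      proof -
        have tt2: "t - t1 \<ge> l ^ 4 / 2" using tl l4 t1l by linarith
        have "2 * (t - t1) \<le> 4 * pi * (t - t1)" by (rule mult_right_mono[OF pi4]) (use tt1 in simp)
        moreover have "l ^ 4 \<le> 2 * (t - t1)" using tt2 by simp
        ultimately have "l ^ 4 \<le> 4 * pi * (t - t1)" by (rule order_trans[rotated])
        then have "sqrt (l ^ 4) \<le> sqrt (4 * pi * (t - t1))" by (rule real_sqrt_le_mono)
        then show ?thesis using l4sq by simp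
      qed
      have Ll': "L \<le> l" using Ll gl by linarith
      have b1: "2 * L / sqrt (4 * pi * t) \<le> 2 / l"
      proof -
        have "2 * L / sqrt (4 * pi * t) \<le> (2 * l) / l\<^sup>2"
          by (rule frac_le) (use Rp Ll' l2p s1 in auto)
        also have "(2 * l) / l\<^sup>2 = 2 / l" using Rp by (simp add: power2_eq_square)
        finally show ?thesis .
      qed
      have b2: "2 * (L + l) / sqrt (4 * pi * (t - t1)) \<le> 4 / l"
      proof -
        have "2 * (L + l) / sqrt (4 * pi * (t - t1)) \<le> (4 * l) / l\<^sup>2"
          by (rule frac_le) (use Rp Ll' l2p s2 in auto)
        also have "(4 * l) / l\<^sup>2 = 4 / l" using Rp by (simp add: power2_eq_square)
        finally show ?thesis .
      qed
      have "(\<theta> + \<epsilon>) * (2 * L / sqrt (4 * pi * t)) \<le> (\<theta> + 1) * (2 / l)"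
        by (rule mult_mono) (use b1 ep1 ep0 th Lp tp in auto)
      moreover have "\<epsilon> * exp t1 * (2 * (L + l) / sqrt (4 * pi * (t - t1))) \<le> exp (- (1 - \<gamma> / 2) * l) * (4 / l)"
        unfolding eE by (rule mult_left_mono[OF b2]) simp
      moreover have "(\<theta> + 1) * (2 / l) + exp (- (1 - \<gamma> / 2) * l) * (4 / l) \<le> \<theta>"
      proof -
        have q4: "(\<theta> + 1) * 2 / l + 4 * exp (- (1 - \<gamma> / 2) * l) / l \<le> \<theta>" using Q by blast
        have "(\<theta> + 1) * (2 / l) + exp (- (1 - \<gamma> / 2) * l) * (4 / l) = (\<theta> + 1) * 2 / l + 4 * exp (- (1 - \<gamma> / 2) * l) / l"
          by simp
        then show ?thesis using q4 by linarith
      qed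
      ultimately have "(\<theta> + \<epsilon>) * (2 * L / sqrt (4 * pi * t)) + \<epsilon> * exp t1 * (2 * (L + l) / sqrt (4 * pi * (t - t1))) \<le> \<theta>"
        by linarith
      then show ?thesis using tt1 by simp
    qed
    have reg': "\<And>t. t \<ge> t1 \<Longrightarrow> (\<theta> + \<epsilon>) * (1 - normal_density 0 (sqrt (2*t)) (L+1)) + \<epsilon> * exp t1 \<le> \<theta> \<or>
        (t > t1 \<and> (\<theta> + \<epsilon>) * (2 * L / sqrt (4 * pi * t)) + \<epsilon> * exp t1 * (2 * (L + l) / sqrt (4 * pi * (t - t1))) \<le> \<theta>)"
      by (rule reg)
    have P1: "\<And>t x. t \<ge> t1 \<Longrightarrow> w t x \<le> \<theta>"
      by (rule phase2(1)[OF th ep0 Lp ms t1p Rp supp reg'])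
    have P2: "\<And>t x. t > t1 \<Longrightarrow> w t x \<le> (\<theta> + \<epsilon>) * (2 * L / sqrt (4 * pi * t)) + \<epsilon> * exp t1 * (2 * (L + l) / sqrt (4 * pi * (t - t1)))"
      by (rule phase2(2)[OF th ep0 Lp ms t1p Rp supp reg'])
    show ?thesis
    proof (rule conjI)
     show "\<forall>x. w (ln ((\<delta> - \<theta>) / \<epsilon>)) x \<le> \<theta>"
     proof
      fix x
      have "ln ((\<delta> - \<theta>) / \<epsilon>) = ln (\<delta> - \<theta>) + l"
        unfolding l_def using ep0 dt by (simp add: ln_div)
      then have "t1 \<le> ln ((\<delta> - \<theta>) / \<epsilon>)" using Q unfolding t1_def by simp
      then show "w (ln ((\<delta> - \<theta>) / \<epsilon>)) x \<le> \<theta>" by (rule P1)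
     qed
    next
     show "\<forall>e>0. \<exists>T. \<forall>t\<ge>T. \<forall>x. \<bar>w t x\<bar> < e"
     proof (intro allI impI)
      fix e :: real assume e: "e > 0"
      have "eventually (\<lambda>t. (\<theta> + \<epsilon>) * (2 * L / sqrt (4 * pi * t)) + \<epsilon> * exp t1 * (2 * (L + l) / sqrt (4 * pi * (t - t1))) < e) at_top"
        using bound_tendsto e by (rule order_tendstoD(2))
      moreover have "eventually (\<lambda>t. t > t1) at_top" by (rule eventually_gt_at_top)
      ultimately have "eventually (\<lambda>t. t > t1 \<and> (\<theta> + \<epsilon>) * (2 * L / sqrt (4 * pi * t)) + \<epsilon> * exp t1 * (2 * (L + l) / sqrt (4 * pi * (t - t1))) < e) at_top"
        by eventually_elim auto
      then obtain T where T: "\<And>t. t \<ge> T \<Longrightarrow> t > t1 \<and> (\<theta> + \<epsilon>) * (2 * L / sqrt (4 * pi * t)) + \<epsilon> * exp t1 * (2 * (L + l) / sqrt (4 * pi * (t - t1))) < e"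
        unfolding eventually_at_top_linorder by blast
      show "\<exists>T. \<forall>t\<ge>T. \<forall>x. \<bar>w t x\<bar> < e"
      proof (intro exI allI impI)
        fix t x assume "T \<le> t"
        then have Tt: "t > t1" "(\<theta> + \<epsilon>) * (2 * L / sqrt (4 * pi * t)) + \<epsilon> * exp t1 * (2 * (L + l) / sqrt (4 * pi * (t - t1))) < e"
          using T by auto
        have "0 \<le> w t x" using Tt(1) t1p by (intro w_nonneg[OF th ep0 Lp ms]) auto
        moreover have "w t x < e" using P2[OF Tt(1), of x] Tt(2) by linarith
        ultimately show "\<bar>w t x\<bar> < e" by simp
      qed
     qed
    qed
  qed
  have "\<epsilon>0 > 0" unfolding \<epsilon>0_def by simp
  then show ?thesis using main by blast
qed

end
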